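(* Let $t$ be a vertex of $P(G,g_0)$. If the operation $\mu_{h,f}$ (for some $h,f\in G_t$) is applicable to $t$, then $\mu_{h,f}(t)$ is a vertex of $P(G,g_0)$ adjacent to $t$. Likewise, if the operation $\mu_h$ (for some $h\in G_t$) is applicable to $t$, then $\mu_h(t)$ is a vertex of $P(G,g_0)$ adjacent to $t$.
   Context: Let $G$ be a finite abelian group of order $D$ with zero element $0$, and let $G^+=G\setminus\{0\}$. For $g_0\in G$, let $T(G,g_0)$ be the set of vectors $t=(t(g))_{g\in G^+}\in\mathbb{Z}_{\ge 0}^{G^+}$ with $\sum_{g\in G^+}t(g)g=g_0$ (sum computed in $G$), where the zero vector is excluded when $g_0=0$. The master corner polyhedron is $P(G,g_0)=\mathrm{conv}\,T(G,g_0)\subset\mathbb{R}^{G^+}$. For $t\in T(G,g_0)$ put $G_t=\{g\in G^+ : t(g)>0\}$. Two vertices are adjacent if the segment joining them is an edge (one-dimensional face) of $P(G,g_0)$. $\mu$-operations: For $t\in T(G,g_0)$ and distinct $h,f\in G_t$ with $t(h)\le t(f)$ and $h+f\neq 0$, the operation $\mu_{h,f}$ is said to be applicable to $t$, and $s=\mu_{h,f}(t)$ is defined by $s(h)=0$, $s(f)=t(f)-t(h)$, $s(h+f)=t(h+f)+t(h)$, and $s(g)=t(g)$ for all other $g\in G^+$. For $t\in T(G,g_0)$ and $h\in G_t$ with $t(h)>1$ and $t(h)h\neq 0$, the operation $\mu_h$ is applicable to $t$, and $s=\mu_h(t)$ is defined by $s(h)=0$, $s(t(h)h)=t(t(h)h)+1$,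 and $s(g)=t(g)$ for all other $g\in G^+$. *)

theory Defs
  imports "HOL-Analysis.Analysis"
begin

text \<open>Vectors of Z_{>=0}^{G^+} are functions t :: 'g => nat with t 0 = 0;
  they are embedded into (real, 'g) vec (coordinate 0 is always 0), which is an
  affine copy of R^{G^+}; faces and extreme points are intrinsic.\<close>

definition nsmul :: "nat \<Rightarrow> 'g::ab_group_add \<Rightarrow> 'g" where
  "nsmul n g = (\<Sum>i<n. g)"

definition gsum :: "('g::{ab_group_add,finite} \<Rightarrow> nat) \<Rightarrow> 'g" where
  "gsum t = (\<Sum>g\<in>UNIV - {0}. nsmul (t g) g)"

definition Tset :: "'g::{ab_group_add,finite} \<Rightarrow> ('g \<Rightarrow> nat) set" where
  "Tset g0 = {t. t 0 = 0 \<and> gsum t = g0 \<and> (g0 = 0 \<longrightarrow> t \<noteq> (\<lambda>_. 0))}"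

definition emb :: "('g::{ab_group_add,finite} \<Rightarrow> nat) \<Rightarrow> (real, 'g) vec" where
  "emb t = (\<chi> g. real (t g))"

definition corner :: "'g::{ab_group_add,finite} \<Rightarrow> ((real, 'g) vec) set" where
  "corner g0 = convex hull (emb ` Tset g0)"

definition supp :: "('g::{ab_group_add,finite} \<Rightarrow> nat) \<Rightarrow> 'g set" where
  "supp t = {g. g \<noteq> 0 \<and> t g > 0}"

definition is_vertex :: "'g::{ab_group_add,finite} \<Rightarrow> ('g \<Rightarrow> nat) \<Rightarrow> bool" where
  "is_vertex g0 t \<longleftrightarrow> t \<in> Tset g0 \<and> emb t extreme_point_of corner g0"

definition adjacent :: "'g::{ab_group_add,finite} \<Rightarrow> ('g \<Rightarrow> nat) \<Rightarrow> ('g \<Rightarrow> nat) \<Rightarrow> bool" where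
  "adjacent g0 t s \<longleftrightarrow> emb t \<noteq> emb s \<and>
     closed_segment (emb t) (emb s) face_of corner g0"

definition mu2 :: "('g::{ab_group_add,finite} \<Rightarrow> nat) \<Rightarrow> 'g \<Rightarrow> 'g \<Rightarrow> ('g \<Rightarrow> nat)" where
  "mu2 t h f = (let s1 = t(h := 0); s2 = s1(f := s1 f - t h) in s2(h + f := s2 (h + f) + t h))"

definition mu1 :: "('g::{ab_group_add,finite} \<Rightarrow> nat) \<Rightarrow> 'g \<Rightarrow> ('g \<Rightarrow> nat)" where
  "mu1 t h = (let s1 = t(h := 0); k = nsmul (t h) h in s1(k := s1 k + 1))"

definition mu2_applicable :: "('g::{ab_group_add,finite} \<Rightarrow> nat) \<Rightarrow> 'g \<Rightarrow> 'g \<Rightarrow> bool" where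
  "mu2_applicable t h f \<longleftrightarrow> h \<in> supp t \<and> f \<in> supp t \<and> h \<noteq> f \<and> t h \<le> t f \<and> h + f \<noteq> 0"

definition mu1_applicable :: "('g::{ab_group_add,finite} \<Rightarrow> nat) \<Rightarrow> 'g \<Rightarrow> bool" where
  "mu1_applicable t h \<longleftrightarrow> h \<in> supp t \<and> t h > 1 \<and> nsmul (t h) h \<noteq> 0"

end

theory Submission
  imports Defs
begin

lemma nsmul_Suc: "nsmul (Suc n) g = nsmul n g + g"
  by (simp add: nsmul_def)
lemma nsmul_0[simp]: "nsmul 0 g = 0" by (simp add: nsmul_def)
lemma nsmul_1[simp]: "nsmul 1 g = g" by (simp add: nsmul_def)
lemma nsmul_Suc0[simp]: "nsmul (Suc 0) g = g" by (simp add: nsmul_def)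
lemma nsmul_zero[simp]: "nsmul n (0::'g::ab_group_add) = 0" by (simp add: nsmul_def)
lemma nsmul_add: "nsmul (m + n) g = nsmul m g + nsmul n g"
  by (induction n) (simp_all add: nsmul_Suc add.assoc)
lemma nsmul_mult: "nsmul (m * n) g = nsmul m (nsmul n g)"
  by (induction m) (simp_all add: nsmul_Suc nsmul_add add.commute)
lemma nsmul_sum: "nsmul c (\<Sum>x\<in>A. f x) = (\<Sum>x\<in>A. nsmul c (f x))"
  by (induction c) (simp_all add: nsmul_Suc sum.distrib)

lemma gsum_add: "gsum (\<lambda>g. p g + q g) = gsum p + gsum q"
  by (simp add: gsum_def nsmul_add sum.distrib)
lemma gsum_cmul: "gsum (\<lambda>g. c * q g) = nsmul c (gsum q)"
  by (simp add: gsum_def nsmul_mult nsmul_sum)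
lemma gsum_single: "(h::'g::{ab_group_add,finite}) \<noteq> 0 \<Longrightarrow> gsum (\<lambda>g. if g = h then n else 0) = nsmul n h"
proof -
  assume h: "h \<noteq> 0"
  have "gsum (\<lambda>g. if g = h then n else 0) = (\<Sum>g\<in>UNIV - {0}. if g = h then nsmul n h else 0)"
    unfolding gsum_def by (rule sum.cong) auto
  also have "\<dots> = nsmul n h" using h by (simp add: sum.delta)
  finally show ?thesis .
qed

definition shift :: "'g::{ab_group_add,finite} \<Rightarrow> ('g \<Rightarrow> nat) \<Rightarrow> ('g \<Rightarrow> nat) \<Rightarrow> nat \<Rightarrow> ('g \<Rightarrow> nat)" where
  "shift k wp p c = (\<lambda>g. if g = k then p k - c else p g + c * wp g)"

definition Wv :: "'g::{ab_group_add,finite} \<Rightarrow> ('g \<Rightarrow> nat) \<Rightarrow> (real,'g) vec" where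
  "Wv k wp = (\<chi> g. real (wp g) - (if g = k then 1 else 0))"

lemma gsum_shift:
  fixes k :: "'g::{ab_group_add,finite}"
  assumes "k \<noteq> 0" "wp k = 0" "gsum wp = k" "c \<le> p k"
  shows "gsum (shift k wp p c) = gsum p"
proof -
  define p1 where "p1 = p(k := p k - c)"
  have "p = (\<lambda>g. p1 g + (if g = k then c else 0))"
    using assms(4) by (auto simp: p1_def)
  hence 1: "gsum p = gsum p1 + nsmul c k"
    using gsum_add[of p1 "\<lambda>g. if g = k then c else 0"] gsum_single[OF assms(1), of c] by simp
  have "shift k wp p c = (\<lambda>g. p1 g + c * wp g)"
    using assms(2) by (auto simp: p1_def shift_def)
  hence "gsum (shift k wp p c) = gsum p1 + nsmul c k"
    using gsum_add[of p1 "\<lambda>g. c * wp g"] gsum_cmul[of c wp] assms(3) by simp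
  with 1 show ?thesis by simp
qed

lemma shift_T:
  fixes k :: "'g::{ab_group_add,finite}"
  assumes "k \<noteq> 0" "wp k = 0" "gsum wp = k" "wp 0 = 0" "wp j > 0"
    "p \<in> Tset g0" "c \<le> p k"
  shows "shift k wp p c \<in> Tset g0"
proof -
  have jk: "j \<noteq> k" using assms by auto
  have nz: "shift k wp p c \<noteq> (\<lambda>_. 0)" if "p \<noteq> (\<lambda>_. 0)"
  proof (cases "c = 0")
    case True
    then have "shift k wp p c = p" by (auto simp: shift_def)
    then show ?thesis using that by simp
  next
    case False
    then have "shift k wp p c j > 0" using jk assms(5) by (simp add: shift_def)
    then show ?thesis by (metis less_irrefl)
  qed
  show ?thesis using assms nz gsum_shift[of k wp c p, OF assms(1-3) assms(7)]
    by (auto simp: Tset_def shift_def)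
qed

lemma emb_shift:
  assumes "c \<le> p k" "wp k = 0"
  shows "emb (shift k wp p c) = emb p + real c *\<^sub>R Wv k wp"
  using assms by (auto simp: vec_eq_iff emb_def Wv_def shift_def of_nat_diff)

lemma corner_nonneg:
  fixes g0 :: "'g::{ab_group_add,finite}"
  assumes "y \<in> corner g0"
  shows "0 \<le> y $ g"
proof -
  have "convex {y::(real,'g) vec. \<forall>g. 0 \<le> y $ g}"
    by (auto simp: convex_def)
  moreover have "emb ` Tset g0 \<subseteq> {y. \<forall>g. 0 \<le> y $ g}" by (auto simp: emb_def)
  ultimately have "corner g0 \<subseteq> {y. \<forall>g. 0 \<le> y $ g}"
    unfolding corner_def by (rule hull_minimal[rotated])
  then show ?thesis using assms by auto
qed

lemma extreme_comb:
  fixes x :: "'a::real_vector"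
  assumes "x extreme_point_of S" "a \<in> S" "b \<in> S" "0 < u" "u < 1" "x = (1 - u) *\<^sub>R a + u *\<^sub>R b"
  shows "a = x \<and> b = x"
proof (cases "a = b")
  case True then show ?thesis using assms(6) by (simp add: algebra_simps)
next
  case False
  then have "x \<in> open_segment a b" using assms(4-6) by (auto simp: in_segment)
  then show ?thesis using assms(1-3) by (auto simp: extreme_point_of_def)
qed


lemma lemB:
  fixes k :: "'g::{ab_group_add,finite}"
  assumes "k \<noteq> 0" "wp k = 0" "gsum wp = k" "wp 0 = 0" "wp j > 0"
    "p \<in> Tset g0" "0 \<le> c" "c \<le> real (p k)"
  shows "emb p + c *\<^sub>R Wv k wp \<in> corner g0"
proof -
  define n where "n = nat \<lfloor>c\<rfloor>"
  have n: "real n \<le> c" "c < real n + 1" using assms(7) unfolding n_def by linarith+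
  have nk: "n \<le> p k" using n assms(8) by linarith
  have inP: "emb p + real i *\<^sub>R Wv k wp \<in> corner g0" if "i \<le> p k" for i
  proof -
    have "shift k wp p i \<in> Tset g0" using shift_T[OF assms(1-5) assms(6) that] .
    then have "emb (shift k wp p i) \<in> corner g0" unfolding corner_def by (simp add: hull_inc)
    then show ?thesis using emb_shift[of i p k wp, OF that assms(2)] by simp
  qed
  show ?thesis
  proof (cases "c = real n")
    case True then show ?thesis using inP[OF nk] by simp
  next
    case False
    then have "Suc n \<le> p k" using n assms(8) by linarith
    have cv: "convex (corner g0)" unfolding corner_def by simp
    define u where "u = c - real n"
    have "(1 - u) *\<^sub>R (emb p + real n *\<^sub>R Wv k wp) + u *\<^sub>R (emb p + real (Suc n) *\<^sub>R Wv k wp) \<in> corner g0"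
      by (rule convexD[OF cv inP[OF nk] inP[OF \<open>Suc n \<le> p k\<close>]]) (use n u_def in auto)
    moreover have "(1 - u) *\<^sub>R (emb p + real n *\<^sub>R Wv k wp) + u *\<^sub>R (emb p + real (Suc n) *\<^sub>R Wv k wp)
        = emb p + c *\<^sub>R Wv k wp"
      unfolding u_def by (simp add: algebra_simps)
    ultimately show ?thesis by simp
  qed
qed

lemma Wv_k: "wp k = 0 \<Longrightarrow> Wv k wp $ k = -1" by (simp add: Wv_def)

lemma lemC:
  fixes k :: "'g::{ab_group_add,finite}"
  assumes "k \<noteq> 0" "wp k = 0" "gsum wp = k" "wp 0 = 0" "wp j > 0"
    "y \<in> corner g0" "0 \<le> c" "c \<le> y $ k"
  shows "y + c *\<^sub>R Wv k wp \<in> corner g0"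
proof -
  define D where "D = {y \<in> corner g0. \<forall>c. 0 \<le> c \<and> c \<le> y $ k \<longrightarrow> y + c *\<^sub>R Wv k wp \<in> corner g0}"
  have cv: "convex (corner g0)" unfolding corner_def by simp
  have "emb ` Tset g0 \<subseteq> D"
    using lemB[OF assms(1-5)] by (auto simp: D_def corner_def hull_inc emb_def)
  moreover have "convex D"
    unfolding convex_def
  proof (intro ballI allI impI)
    fix y1 y2 and u v :: real
    assume y1: "y1 \<in> D" and y2: "y2 \<in> D" and uv0: "0 \<le> u" "0 \<le> v" and uv1: "u + v = 1"
    note uv = uv0 uv1
    let ?y = "u *\<^sub>R y1 + v *\<^sub>R y2"
    have P1: "y1 \<in> corner g0" and P2: "y2 \<in> corner g0" using y1 y2 by (auto simp: D_def)
    have yP: "?y \<in> corner g0" using convexD[OF cv P1 P2 uv] .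
    have n1: "0 \<le> y1 $ k" and n2: "0 \<le> y2 $ k" using corner_nonneg P1 P2 by blast+
    show "?y \<in> D"
      unfolding D_def
    proof (intro CollectI conjI allI impI yP, elim conjE)
      fix c assume c: "0 \<le> c" "c \<le> ?y $ k"
      show "?y + c *\<^sub>R Wv k wp \<in> corner g0"
      proof (cases "?y $ k = 0")
        case True then show ?thesis using c yP by simp
      next
        case False
        have yk: "?y $ k = u * y1 $ k + v * y2 $ k" by simp
        have ykpos: "?y $ k > 0" using False n1 n2 uv yk
          by (metis add_nonneg_nonneg less_eq_real_def mult_nonneg_nonneg)
        define r where "r = c / ?y $ k"
        have r: "0 \<le> r" "r \<le> 1" using c ykpos by (auto simp: r_def)
        have a1: "y1 + (r * y1 $ k) *\<^sub>R Wv k wp \<in> corner g0"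
          using y1 r n1 unfolding D_def by (auto simp: mult_left_le_one_le)
        have a2: "y2 + (r * y2 $ k) *\<^sub>R Wv k wp \<in> corner g0"
          using y2 r n2 unfolding D_def by (auto simp: mult_left_le_one_le)
        have "u *\<^sub>R (y1 + (r * y1 $ k) *\<^sub>R Wv k wp) + v *\<^sub>R (y2 + (r * y2 $ k) *\<^sub>R Wv k wp)
            = ?y + (r * ?y $ k) *\<^sub>R Wv k wp"
          by (simp add: algebra_simps)
        also have "r * ?y $ k = c" using ykpos by (simp add: r_def)
        finally show ?thesis using convexD[OF cv a1 a2 uv] by simp
      qed
    qed
  qed
  ultimately have "corner g0 \<subseteq> D" unfolding corner_def by (rule hull_minimal)
  then show ?thesis using assms(6-8) by (auto simp: D_def)
qed


lemma general:
  fixes k :: "'g::{ab_group_add,finite}"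
  assumes k0: "k \<noteq> 0" and wk: "wp k = 0" and gw: "gsum wp = k" and w0: "wp 0 = 0" and wj: "wp j > 0"
    and tT: "t \<in> Tset g0" and ext: "emb t extreme_point_of corner g0" and m0: "m > 0"
    and le: "\<forall>g. m * wp g \<le> t g" and tj: "t j = m * wp j"
    and sdef: "s = (\<lambda>g. if g = k then t k + m else t g - m * wp g)"
  shows "is_vertex g0 s \<and> adjacent g0 t s"
proof -
  define W where "W = Wv k wp"
  have jk: "j \<noteq> k" using wj wk by auto
  have shs: "shift k wp s m = t"
    using le wk by (auto simp: shift_def sdef)
  have smk: "m \<le> s k" by (simp add: sdef)
  have t0: "t 0 = 0" using tT by (simp add: Tset_def)
  have sT: "s \<in> Tset g0"
  proof -
    have "gsum s = gsum t" using gsum_shift[of k wp m s, OF k0 wk gw smk] shs by simp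
    moreover have "s 0 = 0" using k0 t0 by (simp add: sdef)
    moreover have "s \<noteq> (\<lambda>_. 0)" proof
      assume "s = (\<lambda>_. 0)" then have "s k = 0" by simp
      then show False using m0 by (simp add: sdef)
    qed
    ultimately show ?thesis using tT by (simp add: Tset_def)
  qed
  have embs: "emb s = emb t - real m *\<^sub>R W"
    using emb_shift[of m s k wp, OF smk wk] shs by (simp add: W_def)
  have cv: "convex (corner g0)" unfolding corner_def by simp
  have tP: "emb t \<in> corner g0" using ext by (simp add: extreme_point_of_def)
  have sP: "emb s \<in> corner g0" using sT unfolding corner_def by (simp add: hull_inc)
  define S where "S = closed_segment (emb t) (emb s)"
  have Wj: "W $ j = real (wp j)" using jk by (simp add: W_def Wv_def)
  have bk0: "z \<in> S" if z: "z \<in> corner g0" "0 \<le> c" "z + c *\<^sub>R W = emb t" for z c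
  proof -
    have ze: "z = emb t - c *\<^sub>R W" using z(3) by (simp add: algebra_simps)
    have "0 \<le> z $ j" using corner_nonneg[OF z(1)] .
    then have "c * real (wp j) \<le> real (t j)" using Wj by (simp add: ze emb_def)
    then have "c * real (wp j) \<le> real m * real (wp j)" using tj by simp
    then have cm: "c \<le> real m" using wj by simp
    show ?thesis unfolding S_def in_segment
      by (rule exI[of _ "c / real m"]) (use m0 cm z(2) in \<open>auto simp: ze embs algebra_simps\<close>)
  qed
  have face: "S face_of corner g0"
    unfolding face_of_def
  proof (intro conjI ballI impI)
    show "S \<subseteq> corner g0" unfolding S_def by (rule closed_segment_subset[OF tP sP cv])
    show "convex S" unfolding S_def by simp
    fix a b x assume a: "a \<in> corner g0" and b: "b \<in> corner g0" and x: "x \<in> S" and xo: "x \<in> open_segment a b"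
    obtain u where u: "0 \<le> u" "u \<le> 1" "x = (1 - u) *\<^sub>R emb t + u *\<^sub>R emb s"
      using x unfolding S_def in_segment by blast
    define l where "l = u * real m"
    have l0: "0 \<le> l" using u by (simp add: l_def)
    have xl: "x = emb t - l *\<^sub>R W" using u(3) by (simp add: embs l_def algebra_simps)
    obtain v where v: "0 < v" "v < 1" "x = (1 - v) *\<^sub>R a + v *\<^sub>R b"
      using xo unfolding in_segment by blast
    have lpos: "l > 0"
    proof (rule ccontr)
      assume "\<not> l > 0" then have "x = emb t" using l0 xl by simp
      then show False using ext a b xo by (auto simp: extreme_point_of_def)
    qed
    define xk where "xk = x $ k"
    have xk: "xk = real (t k) + l" using wk by (simp add: xk_def xl emb_def W_def Wv_def)
    have xkpos: "xk > 0" using xk lpos by simp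
    have ak: "0 \<le> a $ k" and bk: "0 \<le> b $ k" using corner_nonneg a b by blast+
    have xk2: "xk = (1 - v) * a $ k + v * b $ k" using v(3) by (simp add: xk_def)
    define ca where "ca = l * a $ k / xk"
    define cb where "cb = l * b $ k / xk"
    have lx: "l / xk \<le> 1" using xk xkpos by simp
    have ca: "0 \<le> ca" "ca \<le> a $ k" using ak lpos xkpos lx
      proof -
      have "l * a $ k \<le> xk * a $ k" using ak xk lpos by (intro mult_right_mono) auto
      then show "0 \<le> ca" "ca \<le> a $ k" using ak lpos xkpos by (auto simp: ca_def pos_divide_le_eq mult.commute)
    qed
    have cb: "0 \<le> cb" "cb \<le> b $ k" using bk lpos xkpos lx
      proof -
      have "l * b $ k \<le> xk * b $ k" using bk xk lpos by (intro mult_right_mono) auto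
      then show "0 \<le> cb" "cb \<le> b $ k" using bk lpos xkpos by (auto simp: cb_def pos_divide_le_eq mult.commute)
    qed
    have a': "a + ca *\<^sub>R W \<in> corner g0" using lemC[OF k0 wk gw w0 wj a ca, folded W_def] .
    have b': "b + cb *\<^sub>R W \<in> corner g0" using lemC[OF k0 wk gw w0 wj b cb, folded W_def] .
    have "(1 - v) * ca + v * cb = l * ((1 - v) * a $ k + v * b $ k) / xk"
      using xkpos by (simp add: ca_def cb_def field_simps)
    also have "\<dots> = l" using xk2 xkpos by simp
    finally have comb: "(1 - v) * ca + v * cb = l" .
    have "(1 - v) *\<^sub>R (a + ca *\<^sub>R W) + v *\<^sub>R (b + cb *\<^sub>R W) = x + ((1 - v) * ca + v * cb) *\<^sub>R W"
      using v(3) by (simp add: algebra_simps)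
    also have "\<dots> = emb t" using comb xl by simp
    finally have "a + ca *\<^sub>R W = emb t \<and> b + cb *\<^sub>R W = emb t"
      using extreme_comb[OF ext a' b' v(1) v(2)] by simp
    then show "a \<in> S" "b \<in> S" using bk0 a b ca(1) cb(1) by auto
  qed
  have "emb s extreme_point_of S" unfolding S_def by (simp add: extreme_point_of_segment)
  then have es: "emb s extreme_point_of corner g0" using extreme_point_of_face[OF face] by simp
  have ne: "emb t \<noteq> emb s"
  proof
    assume "emb t = emb s"
    then have "emb t $ k = emb s $ k" by simp
    then show False using m0 by (simp add: emb_def sdef)
  qed
  show ?thesis using sT es ne face by (simp add: is_vertex_def adjacent_def S_def)
qed


lemma gsum_upd:
  fixes h :: "'g::{ab_group_add,finite}"
  assumes "h \<noteq> 0"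
  shows "gsum (t(h := n)) = gsum (t(h := 0)) + nsmul n h"
proof -
  have "t(h := n) = (\<lambda>g. (t(h := 0)) g + (if g = h then n else 0))" by auto
  then show ?thesis using gsum_add[of "t(h:=0)" "\<lambda>g. if g = h then n else 0"] gsum_single[OF assms, of n]
    by simp
qed

lemma mu1_degenerate:
  fixes h :: "'g::{ab_group_add,finite}"
  assumes tT: "t \<in> Tset g0" and ext: "emb t extreme_point_of corner g0"
    and h0: "h \<noteq> 0" and a: "t h > 1" and kh: "nsmul (t h) h = h"
  shows False
proof -
  define a where "a = t h"
  have a1: "a > 1" using a by (simp add: a_def)
  have "nsmul a h = nsmul (a - 1) h + nsmul 1 h" using a1 nsmul_add[of "a - 1" 1 h] by simp
  then have z: "nsmul (a - 1) h = 0" using kh by (simp add: a_def)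
  have e: "2 * a - 1 = (a - 1) + a" using a1 by simp
  have "nsmul (2 * a - 1) h = nsmul (a - 1) h + nsmul a h" by (simp only: e nsmul_add)
  then have n2: "nsmul (2 * a - 1) h = h" using z kh by (simp add: a_def)
  have tt: "t = t(h := a)" by (simp add: a_def)
  have gt: "gsum t = gsum (t(h := 0)) + h" using gsum_upd[OF h0, of t a] kh tt by (simp add: a_def)
  have t0: "t 0 = 0" "gsum t = g0" using tT by (auto simp: Tset_def)
  have T1: "t(h := 1) \<in> Tset g0"
  proof -
    have "t(h := 1) \<noteq> (\<lambda>_. 0)" by (metis fun_upd_same zero_neq_one)
    then show ?thesis using gsum_upd[OF h0, of t 1] gt t0 h0 by (simp add: Tset_def)
  qed
  have T2: "t(h := 2 * a - 1) \<in> Tset g0"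
  proof -
    have "t(h := 2 * a - 1) \<noteq> (\<lambda>_. 0)" using a1
      by (metis fun_upd_same diff_is_0_eq le_trans mult_2 le_add1 not_le)
    then show ?thesis using gsum_upd[OF h0, of t "2 * a - 1"] n2 gt t0 h0 by (simp add: Tset_def)
  qed
  have P1: "emb (t(h := 1)) \<in> corner g0" using T1 unfolding corner_def by (simp add: hull_inc)
  have P2: "emb (t(h := 2 * a - 1)) \<in> corner g0" using T2 unfolding corner_def by (simp add: hull_inc)
  have "emb t = (1 - 1/2) *\<^sub>R emb (t(h := 1)) + (1/2) *\<^sub>R emb (t(h := 2 * a - 1))"
    using a1 by (auto simp: vec_eq_iff emb_def a_def of_nat_diff field_simps)
  then have "emb (t(h := 1)) = emb t" using extreme_comb[OF ext P1 P2, of "1/2"] by simp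
  then have "emb (t(h := 1)) $ h = emb t $ h" by simp
  then show False using a1 by (simp add: emb_def a_def)
qed

theorem theorem3:
  fixes g0 :: "'g::{ab_group_add,finite}" and t :: "'g \<Rightarrow> nat"
  assumes "is_vertex g0 t"
  shows "(\<forall>h f. mu2_applicable t h f \<longrightarrow>
            is_vertex g0 (mu2 t h f) \<and> adjacent g0 t (mu2 t h f)) \<and>
         (\<forall>h. mu1_applicable t h \<longrightarrow>
            is_vertex g0 (mu1 t h) \<and> adjacent g0 t (mu1 t h))"
proof (rule conjI; intro allI impI)
  have tT: "t \<in> Tset g0" and ext: "emb t extreme_point_of corner g0"
    using assms by (auto simp: is_vertex_def)
  fix h f assume ap: "mu2_applicable t h f"
  then have h0: "h \<noteq> 0" and f0: "f \<noteq> 0" and th: "t h > 0" and hf: "h \<noteq> f" and le: "t h \<le> t f"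
    and k0: "h + f \<noteq> 0"
    by (auto simp: mu2_applicable_def supp_def)
  define wp where "wp = (\<lambda>g. (if g = h then 1 else 0) + (if g = f then 1 else (0::nat)))"
  have khf: "h + f \<noteq> h" "h + f \<noteq> f" using h0 f0 by auto
  have gw: "gsum wp = h + f"
    using gsum_add[of "\<lambda>g. if g = h then 1 else 0" "\<lambda>g. if g = f then 1 else (0::nat)"]
      gsum_single[OF h0, of 1] gsum_single[OF f0, of 1] by (simp add: wp_def)
  have "is_vertex g0 (\<lambda>g. if g = h + f then t (h + f) + t h else t g - t h * wp g) \<and>
        adjacent g0 t (\<lambda>g. if g = h + f then t (h + f) + t h else t g - t h * wp g)"
    by (rule general[where k="h + f" and wp=wp and j=h and m="t h"])
       (use khf h0 f0 hf le gw tT ext th k0 in \<open>auto simp: wp_def\<close>)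
  moreover have "mu2 t h f = (\<lambda>g. if g = h + f then t (h + f) + t h else t g - t h * wp g)"
    using khf hf by (auto simp: mu2_def Let_def wp_def)
  ultimately show "is_vertex g0 (mu2 t h f) \<and> adjacent g0 t (mu2 t h f)" by simp
next
  have tT: "t \<in> Tset g0" and ext: "emb t extreme_point_of corner g0"
    using assms by (auto simp: is_vertex_def)
  fix h assume ap: "mu1_applicable t h"
  then have h0: "h \<noteq> 0" and a: "t h > 1" and k0: "nsmul (t h) h \<noteq> 0"
    by (auto simp: mu1_applicable_def supp_def)
  define k where "k = nsmul (t h) h"
  have kh: "k \<noteq> h" using mu1_degenerate[OF tT ext h0 a] by (auto simp: k_def)
  define wp where "wp = (\<lambda>g. if g = h then t h else (0::nat))"
  have gw: "gsum wp = k" using gsum_single[OF h0, of "t h"] by (simp add: wp_def k_def)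
  have "is_vertex g0 (\<lambda>g. if g = k then t k + 1 else t g - 1 * wp g) \<and>
        adjacent g0 t (\<lambda>g. if g = k then t k + 1 else t g - 1 * wp g)"
    by (rule general[where k=k and wp=wp and j=h and m=1])
       (use kh h0 k0 a gw tT ext in \<open>auto simp: wp_def k_def\<close>)
  moreover have "mu1 t h = (\<lambda>g. if g = k then t k + 1 else t g - 1 * wp g)"
    using kh by (auto simp: mu1_def Let_def wp_def k_def)
  ultimately show "is_vertex g0 (mu1 t h) \<and> adjacent g0 t (mu1 t h)" by simp
qed

end
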